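(* Assume the subexponential regime $a_T/T\to0$. Then the SVP predictor $\hat c_{\mathrm V}(x,\mathbb P,T)=c(x,\mathbb P)+\sqrt{\frac{2a_T}{T}\mathrm{Var}_{\mathbb P}(\ell(x,\xi))}$ satisfies the out-of-sample guarantee with speed $(a_T)$.
   Context: Setting: $\Sigma=\{1,\dots,d\}$ ($d\ge2$) is finite; $\mathcal P\subset\mathbb R^d$ is the probability simplex over $\Sigma$ and $\mathcal P^o$ its relative interior (all entries positive). $\mathcal X\subset\mathbb R^n$ is compact and $\ell:\mathcal X\times\Sigma\to\mathbb R$ is continuous in $x$ for each $i$. For $x\in\mathcal X$, $\mu\in\mathbb R^d$ let $c(x,\mu)=\sum_{i\in\Sigma}\ell(x,i)\mu(i)$, and $\mathrm{Var}_{\mathbb P}(\ell(x,\xi))=\sum_i\mathbb P(i)(\ell(x,i)-c(x,\mathbb P))^2$. Data $\xi_1,\xi_2,\dots$ are i.i.d. with law $\mathbb P\in\mathcal P$, $\mathbb P^\infty$ denotes their joint law, and $\hat{\mathbb P}_T(i)=\frac1T\sum_{t=1}^T\mathbf 1\{\xi_t=i\}$. $(a_T)_{T\ge1}$ is a sequence of positive reals with $a_T\to\infty$. Out-of-sample guarantee with speed $(a_T)$ for a predictor $\hat c$ (a sequence of functions $\hat c(\cdot,\cdot,T):\mathcal X\times\mathcal P\to\mathbb R$): for all $x\in\mathcal X$ and $\mathbb P\in\mathcal P^o$, $\limsup_{T\to\infty}\frac1{a_T}\log\mathbb P^\infty\big(c(x,\mathbb P)>\hat c(x,\hat{\mathbb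 P}_T,T)\big)\le-1$. *)

theory Defs
  imports "HOL-Analysis.Analysis" "HOL-Probability.Probability"
begin

text \<open>Alphabet Sigma = {1..d}; distributions mu are functions nat => real
  (only the entries on {1..d} matter).\<close>

definition cost :: "nat \<Rightarrow> ('x \<Rightarrow> nat \<Rightarrow> real) \<Rightarrow> 'x \<Rightarrow> (nat \<Rightarrow> real) \<Rightarrow> real" where
  "cost d loss x \<mu> = (\<Sum>i\<in>{1..d}. loss x i * \<mu> i)"

definition varc :: "nat \<Rightarrow> ('x \<Rightarrow> nat \<Rightarrow> real) \<Rightarrow> 'x \<Rightarrow> (nat \<Rightarrow> real) \<Rightarrow> real" where
  "varc d loss x \<mu> = (\<Sum>i\<in>{1..d}. \<mu> i * (loss x i - cost d loss x \<mu>)^2)"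

definition svp :: "nat \<Rightarrow> ('x \<Rightarrow> nat \<Rightarrow> real) \<Rightarrow> (nat \<Rightarrow> real) \<Rightarrow> 'x \<Rightarrow> (nat \<Rightarrow> real) \<Rightarrow> nat \<Rightarrow> real" where
  "svp d loss a x \<mu> T = cost d loss x \<mu> + sqrt (2 * a T / real T * varc d loss x \<mu>)"

text \<open>Empirical distribution of the first T samples xi_1..xi_T = w!!0 .. w!!(T-1).\<close>
definition empirical :: "nat \<Rightarrow> nat stream \<Rightarrow> nat \<Rightarrow> real" where
  "empirical T \<omega> i = card {t. t < T \<and> \<omega> !! t = i} / real T"

definition elog :: "real \<Rightarrow> ereal" where
  "elog p = (if p = 0 then -\<infinity> else ereal (ln p))"

end

theory Submission
  imports Defs
begin


lemma exp_taylor2: "exp (u::real) \<le> 1 + u + u^2/2 * exp \<bar>u\<bar>"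
proof -
  obtain t where t: "\<bar>t\<bar> \<le> \<bar>u\<bar>" "exp u = (\<Sum>m<2. (u ^ m) / fact m) + (exp t / fact 2) * u ^ 2"
    using Maclaurin_exp_le[of u 2] by blast
  have "exp t \<le> exp \<bar>u\<bar>" using t(1) by simp
  hence "(exp t / fact 2) * u ^ 2 \<le> u^2/2 * exp \<bar>u\<bar>"
    using mult_right_mono[OF \<open>exp t \<le> exp \<bar>u\<bar>\<close>, of "u^2"] by (simp add: mult.commute)
  moreover have "(\<Sum>m<2. (u ^ m) / fact m) = 1 + u" by (simp add: numeral_2_eq_2)
  ultimately show ?thesis using t(2) by linarith
qed

lemma mgf_bound:
  fixes p g :: "nat \<Rightarrow> real"
  assumes "finite A" "\<And>i. i \<in> A \<Longrightarrow> p i \<ge> 0" "(\<Sum>i\<in>A. p i) = 1"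
    "(\<Sum>i\<in>A. p i * g i) = 0" "\<And>i. i \<in> A \<Longrightarrow> \<bar>g i\<bar> \<le> B" "l \<ge> 0"
  shows "(\<Sum>i\<in>A. p i * exp (l * g i)) \<le> exp (l^2 * (\<Sum>i\<in>A. p i * (g i)^2) * exp (l*B) / 2)"
proof -
  have "(\<Sum>i\<in>A. p i * exp (l * g i)) \<le> (\<Sum>i\<in>A. p i * (1 + l * g i + (l * g i)^2/2 * exp (l*B)))"
  proof (rule sum_mono)
    fix i assume i: "i \<in> A"
    have "exp \<bar>l * g i\<bar> \<le> exp (l*B)" using assms(5)[OF i] assms(6)
      by (simp add: abs_mult mult_left_mono)
    hence "exp (l * g i) \<le> 1 + l * g i + (l * g i)^2/2 * exp (l*B)"
      using exp_taylor2[of "l * g i"] by (smt (verit) mult_left_mono zero_le_power2 divide_nonneg_pos)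
    thus "p i * exp (l * g i) \<le> p i * (1 + l * g i + (l * g i)^2/2 * exp (l*B))"
      using assms(2)[OF i] by (simp add: mult_left_mono)
  qed
  also have "\<dots> = (\<Sum>i\<in>A. p i) + l * (\<Sum>i\<in>A. p i * g i) + l^2 * (\<Sum>i\<in>A. p i * (g i)^2) * exp (l*B) / 2"
    by (simp add: sum.distrib sum_distrib_left sum_divide_distrib sum_distrib_right algebra_simps power2_eq_square)
  also have "\<dots> = 1 + l^2 * (\<Sum>i\<in>A. p i * (g i)^2) * exp (l*B) / 2" using assms by simp
  also have "\<dots> \<le> exp (l^2 * (\<Sum>i\<in>A. p i * (g i)^2) * exp (l*B) / 2)" by (rule exp_ge_add_one_self)
  finally show ?thesis .
qed




lemma mgf_stream:
  fixes P :: "nat pmf" and g :: "nat \<Rightarrow> real"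
  shows "(\<integral>\<^sup>+\<omega>. ennreal (exp (l * (\<Sum>t<T. g (\<omega> !! t)))) \<partial>stream_space (measure_pmf P))
       = (\<integral>\<^sup>+x. ennreal (exp (l * g x)) \<partial>measure_pmf P) ^ T"
proof (induction T)
  case 0
  interpret S: prob_space "stream_space (measure_pmf P)"
    by (rule prob_space.prob_space_stream_space[OF prob_space_measure_pmf])
  show ?case by (simp add: S.emeasure_space_1)
next
  case (Suc T)
  have "(\<integral>\<^sup>+\<omega>. ennreal (exp (l * (\<Sum>t<Suc T. g (\<omega> !! t)))) \<partial>stream_space (measure_pmf P))
     = (\<integral>\<^sup>+x. (\<integral>\<^sup>+\<omega>. ennreal (exp (l * (\<Sum>t<Suc T. g ((x ## \<omega>) !! t)))) \<partial>stream_space (measure_pmf P)) \<partial>measure_pmf P)"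
    by (rule prob_space.nn_integral_stream_space[OF prob_space_measure_pmf]) measurable
  also have "\<dots> = (\<integral>\<^sup>+x. (\<integral>\<^sup>+\<omega>. ennreal (exp (l * g x)) * ennreal (exp (l * (\<Sum>t<T. g (\<omega> !! t)))) \<partial>stream_space (measure_pmf P)) \<partial>measure_pmf P)"
    by (simp del: sum.lessThan_Suc add: sum.lessThan_Suc_shift distrib_left exp_add ennreal_mult)
  also have "\<dots> = (\<integral>\<^sup>+x. ennreal (exp (l * g x)) * (\<integral>\<^sup>+x. ennreal (exp (l * g x)) \<partial>measure_pmf P) ^ T \<partial>measure_pmf P)"
    by (subst nn_integral_cmult) (auto simp: Suc.IH)
  also have "\<dots> = (\<integral>\<^sup>+x. ennreal (exp (l * g x)) \<partial>measure_pmf P) ^ Suc T"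
    by (subst nn_integral_multc) (auto simp: mult.commute)
  finally show ?case .
qed

lemma chernoff_stream:
  fixes P :: "nat pmf" and g :: "nat \<Rightarrow> real"
  assumes "finite A" "set_pmf P \<subseteq> A" "l \<ge> 0"
  shows "measure (stream_space (measure_pmf P)) {\<omega> \<in> space (stream_space (measure_pmf P)). c \<le> (\<Sum>t<T. g (\<omega> !! t))}
     \<le> exp (- l * c) * (\<Sum>i\<in>A. pmf P i * exp (l * g i)) ^ T"
proof -
  interpret S: prob_space "stream_space (measure_pmf P)"
    by (rule prob_space.prob_space_stream_space[OF prob_space_measure_pmf])
  let ?E = "{\<omega> \<in> space (stream_space (measure_pmf P)). c \<le> (\<Sum>t<T. g (\<omega> !! t))}"
  have "emeasure (stream_space (measure_pmf P)) ?E = (\<integral>\<^sup>+\<omega>. indicator ?E \<omega> \<partial>stream_space (measure_pmf P))"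
    by (rule nn_integral_indicator[symmetric]) measurable
  also have "\<dots> \<le> (\<integral>\<^sup>+\<omega>. ennreal (exp (- l * c)) * ennreal (exp (l * (\<Sum>t<T. g (\<omega> !! t)))) \<partial>stream_space (measure_pmf P))"
  proof (rule nn_integral_mono)
    fix \<omega> 
    show "indicator ?E \<omega> \<le> ennreal (exp (- l * c)) * ennreal (exp (l * (\<Sum>t<T. g (\<omega> !! t))))"
    proof (cases "\<omega> \<in> ?E")
      case True
      hence "l * c \<le> l * (\<Sum>t<T. g (\<omega> !! t))" using assms(3) by (simp add: mult_left_mono)
      hence "1 \<le> exp (- l * c) * exp (l * (\<Sum>t<T. g (\<omega> !! t)))"
        by (simp add: exp_add[symmetric])
      thus ?thesis using True by (simp add: ennreal_mult[symmetric])
    qed simp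
  qed
  also have "\<dots> = ennreal (exp (- l * c)) * (\<integral>\<^sup>+x. ennreal (exp (l * g x)) \<partial>measure_pmf P) ^ T"
    by (subst nn_integral_cmult) (auto simp: mgf_stream)
  also have "(\<integral>\<^sup>+x. ennreal (exp (l * g x)) \<partial>measure_pmf P) = (\<Sum>i\<in>A. ennreal (exp (l * g i)) * pmf P i)"
    by (rule nn_integral_measure_pmf_support) (use assms in auto)
  also have "\<dots> = ennreal (\<Sum>i\<in>A. pmf P i * exp (l * g i))"
    by (subst sum_ennreal[symmetric]) (auto simp: ennreal_mult mult.commute)
  finally have "emeasure (stream_space (measure_pmf P)) ?E \<le> ennreal (exp (- l * c) * (\<Sum>i\<in>A. pmf P i * exp (l * g i)) ^ T)"
    by (simp add: ennreal_mult ennreal_power sum_nonneg)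
  thus ?thesis by (simp add: S.emeasure_eq_measure sum_nonneg)
qed




lemma chernoff_full:
  fixes P :: "nat pmf" and g :: "nat \<Rightarrow> real"
  assumes "finite A" "set_pmf P \<subseteq> A" "l \<ge> 0"
    "(\<Sum>i\<in>A. pmf P i * g i) = 0" "\<And>i. i \<in> A \<Longrightarrow> \<bar>g i\<bar> \<le> B"
  shows "measure (stream_space (measure_pmf P)) {\<omega> \<in> space (stream_space (measure_pmf P)). c \<le> (\<Sum>t<T. g (\<omega> !! t))}
     \<le> exp (- l * c + real T * (l^2 * (\<Sum>i\<in>A. pmf P i * (g i)^2) * exp (l*B) / 2))"
proof -
  have s1: "(\<Sum>i\<in>A. pmf P i) = 1" using sum_pmf_eq_1[OF assms(1,2)] .
  have "(\<Sum>i\<in>A. pmf P i * exp (l * g i)) \<le> exp (l^2 * (\<Sum>i\<in>A. pmf P i * (g i)^2) * exp (l*B) / 2)"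
    by (rule mgf_bound) (use assms s1 in auto)
  hence "(\<Sum>i\<in>A. pmf P i * exp (l * g i)) ^ T \<le> exp (l^2 * (\<Sum>i\<in>A. pmf P i * (g i)^2) * exp (l*B) / 2) ^ T"
    by (rule power_mono) (auto intro: sum_nonneg)
  also have "\<dots> = exp (real T * (l^2 * (\<Sum>i\<in>A. pmf P i * (g i)^2) * exp (l*B) / 2))"
    by (simp add: exp_of_nat_mult[symmetric])
  finally have h1: "(\<Sum>i\<in>A. pmf P i * exp (l * g i)) ^ T \<le> exp (real T * (l^2 * (\<Sum>i\<in>A. pmf P i * (g i)^2) * exp (l*B) / 2))" .
  have "measure (stream_space (measure_pmf P)) {\<omega> \<in> space (stream_space (measure_pmf P)). c \<le> (\<Sum>t<T. g (\<omega> !! t))}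
     \<le> exp (- l * c) * (\<Sum>i\<in>A. pmf P i * exp (l * g i)) ^ T"
    by (rule chernoff_stream[OF assms(1-3)])
  also have "\<dots> \<le> exp (- l * c) * exp (real T * (l^2 * (\<Sum>i\<in>A. pmf P i * (g i)^2) * exp (l*B) / 2))"
    using h1 by (rule mult_left_mono) simp
  also have "\<dots> = exp (- l * c + real T * (l^2 * (\<Sum>i\<in>A. pmf P i * (g i)^2) * exp (l*B) / 2))"
    by (simp only: mult_exp_exp)
  finally show ?thesis .
qed

lemma sum_emp:
  assumes "\<And>t. \<omega> !! t \<in> {1..d}"
  shows "(\<Sum>i\<in>{1..d}. f i * empirical T \<omega> i) = (\<Sum>t<T. f (\<omega> !! t)) / real T"
proof -
  have c: "card {t. t < T \<and> \<omega> !! t = i} = (\<Sum>t<T. if \<omega> !! t = i then 1 else 0)" for i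
  proof -
    have "{t. t < T \<and> \<omega> !! t = i} = {t\<in>{..<T}. \<omega> !! t = i}" by auto
    hence "card {t. t < T \<and> \<omega> !! t = i} = (\<Sum>t\<in>{t\<in>{..<T}. \<omega> !! t = i}. 1)" by simp
    also have "\<dots> = (\<Sum>t<T. if \<omega> !! t = i then 1 else 0)" by (rule sum.inter_filter) simp
    finally show ?thesis .
  qed
  have "(\<Sum>i\<in>{1..d}. f i * empirical T \<omega> i) = (\<Sum>i\<in>{1..d}. (\<Sum>t<T. if \<omega> !! t = i then f i else 0) / real T)"
  proof (intro sum.cong refl)
    fix i
    have "real (card {t. t < T \<and> \<omega> !! t = i}) = (\<Sum>t<T. if \<omega> !! t = i then 1 else (0::real))"
      unfolding c by (simp add: of_nat_sum if_distrib cong: if_cong)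
    hence "f i * real (card {t. t < T \<and> \<omega> !! t = i}) = (\<Sum>t<T. if \<omega> !! t = i then f i else 0)"
      by (simp add: sum_distrib_left if_distrib cong: if_cong)
    thus "f i * empirical T \<omega> i = (\<Sum>t<T. if \<omega> !! t = i then f i else 0) / real T"
      unfolding empirical_def by simp
  qed
  also have "\<dots> = (\<Sum>i\<in>{1..d}. (\<Sum>t<T. if \<omega> !! t = i then f i else 0)) / real T"
    by (rule sum_divide_distrib[symmetric])
  also have "(\<Sum>i\<in>{1..d}. (\<Sum>t<T. if \<omega> !! t = i then f i else 0)) = (\<Sum>t<T. \<Sum>i\<in>{1..d}. if \<omega> !! t = i then f i else 0)"
    by (rule sum.swap)
  also have "\<dots> = (\<Sum>t<T. f (\<omega> !! t))"
    using assms by (intro sum.cong refl) (auto simp: sum.delta' cong: if_cong)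
  finally show ?thesis .
qed




lemma det:
  fixes y :: "nat \<Rightarrow> real"
  assumes T: "T > 0" and r: "r > 0" and eps: "0 \<le> \<epsilon>" "\<epsilon> \<le> 1" and s2: "\<sigma>2 \<ge> 0"
    and ev: "m > (\<Sum>t<T. y t)/T + sqrt (r * ((\<Sum>t<T. (y t - (\<Sum>t<T. y t)/T)^2)/T))"
  shows "real T * (\<epsilon> * \<sigma>2) \<le> (\<Sum>t<T. \<sigma>2 - (y t - m)^2)
       \<or> real T * sqrt (r * (1 - \<epsilon>) * \<sigma>2 / (1 + r)) \<le> (\<Sum>t<T. m - y t)"
proof -
  define ch where "ch = (\<Sum>t<T. y t)/T"
  define D where "D = m - ch"
  define SV where "SV = (\<Sum>t<T. (y t - m)^2)"
  define V where "V = SV/T"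
  have Tp: "real T > 0" using T by simp
  have Ty: "(\<Sum>t<T. y t) = T * ch" using Tp by (simp add: ch_def)
  have sD: "(\<Sum>t<T. m - y t) = T * D" unfolding sum_subtractf Ty D_def by (simp add: right_diff_distrib)
  have sD2: "(\<Sum>t<T. y t - m) = - (T * D)" unfolding sD[symmetric] sum_negf[symmetric] by simp
  have "(\<Sum>t<T. (y t - ch)^2) = (\<Sum>t<T. (y t - m)^2 + 2 * D * (y t - m) + D^2)"
    by (intro sum.cong refl) (simp add: D_def power2_eq_square algebra_simps)
  also have "\<dots> = SV + 2 * D * (\<Sum>t<T. y t - m) + T * D^2"
    unfolding SV_def by (simp add: sum.distrib sum_distrib_left)
  also have "\<dots> = SV - T * D^2" unfolding sD2 by (simp add: power2_eq_square)
  finally have e1: "(\<Sum>t<T. (y t - ch)^2) = SV - T * D^2" .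
  have vh: "(\<Sum>t<T. (y t - ch)^2)/T = V - D^2" unfolding e1 V_def using Tp
    by (simp add: diff_divide_distrib)
  have ev0: "m > ch + sqrt (r * ((\<Sum>t<T. (y t - ch)^2)/T))" using ev unfolding ch_def .
  have ev': "D > sqrt (r * (V - D^2))" using ev0 unfolding vh D_def by simp
  have vnn: "V - D^2 \<ge> 0" unfolding vh[symmetric] by (simp add: sum_nonneg)
  have rv: "r * (V - D^2) \<ge> 0" using r vnn by simp
  have sq0: "sqrt (r * (V - D^2)) \<ge> 0" using rv by simp
  have D0: "D \<ge> 0" using ev' sq0 by linarith
  have "sqrt (r * (V - D^2)) ^2 < D^2"
    by (rule power_strict_mono[OF ev' sq0]) simp
  hence "r * (V - D^2) < D^2" using rv by simp
  hence key: "r * V < D^2 * (1 + r)" by (simp add: algebra_simps)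
  show ?thesis
  proof (cases "V \<le> (1 - \<epsilon>) * \<sigma>2")
    case True
    have "(\<Sum>t<T. \<sigma>2 - (y t - m)^2) = T * \<sigma>2 - SV" by (simp add: sum_subtractf SV_def)
    moreover have "SV = T * V" using Tp by (simp add: V_def)
    moreover have "T * V \<le> T * ((1 - \<epsilon>) * \<sigma>2)" using True Tp by simp
    ultimately show ?thesis by (simp add: algebra_simps)
  next
    case False
    hence "r * ((1 - \<epsilon>) * \<sigma>2) \<le> r * V" using r by simp
    hence "r * (1 - \<epsilon>) * \<sigma>2 < D^2 * (1 + r)" using key by simp
    hence "r * (1 - \<epsilon>) * \<sigma>2 / (1 + r) \<le> D^2" using r by (simp add: divide_le_eq)
    hence "sqrt (r * (1 - \<epsilon>) * \<sigma>2 / (1 + r)) \<le> sqrt (D^2)" by (rule real_sqrt_le_mono)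
    hence "sqrt (r * (1 - \<epsilon>) * \<sigma>2 / (1 + r)) \<le> D" using D0 by simp
    hence "T * sqrt (r * (1 - \<epsilon>) * \<sigma>2 / (1 + r)) \<le> T * D" using Tp by simp
    thus ?thesis using sD by simp
  qed
qed




lemma elog_div_le:
  assumes "a > 0" "0 \<le> p" "p \<le> q" "q > 0"
  shows "elog p / ereal a \<le> ereal (ln q / a)"
proof (cases "p = 0")
  case True
  then show ?thesis using assms by (simp add: elog_def divide_ereal_def)
next
  case False
  hence "ln p \<le> ln q" using assms by simp
  hence "ln p / a \<le> ln q / a" using assms by (simp add: divide_right_mono)
  thus ?thesis using False assms by (simp add: elog_def)
qed

lemma measure_AE_le:
  assumes "prob_space M" "AE \<omega> in M. Q \<omega>"
    "\<And>\<omega>. \<omega> \<in> space M \<Longrightarrow> Q \<omega> \<Longrightarrow> \<omega> \<in> A \<Longrightarrow> \<omega> \<in> B" "B \<in> sets M"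
  shows "measure M A \<le> measure M B"
proof -
  interpret prob_space M by fact
  have "AE \<omega> in M. \<omega> \<in> A \<longrightarrow> \<omega> \<in> B"
    using assms(2) AE_space by eventually_elim (use assms(3) in auto)
  hence e: "emeasure M A \<le> emeasure M B" by (rule emeasure_mono_AE) fact
  show ?thesis
  proof (cases "A \<in> sets M")
    case True
    thus ?thesis using e assms(4) by (simp add: emeasure_eq_measure)
  next
    case False
    thus ?thesis by (simp add: measure_notin_sets)
  qed
qed

lemma test_meas:
  fixes P :: "nat pmf" and g :: "nat \<Rightarrow> real"
  shows "{\<omega> \<in> space (stream_space (measure_pmf P)). c \<le> (\<Sum>t<T. g (\<omega> !! t))} \<in> sets (stream_space (measure_pmf P))"
  by measurable

lemma test_AE:
  fixes P :: "nat pmf"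
  assumes "set_pmf P = {1..d}"
  shows "AE \<omega> in stream_space (measure_pmf P). \<forall>t. \<omega> !! t \<in> {1..d}"
proof -
  have "AE \<omega> in stream_space (measure_pmf P). stream_all (\<lambda>i. i \<in> {1..d}) \<omega>"
    by (rule prob_space.AE_stream_all[OF prob_space_measure_pmf]) (use AE_measure_pmf[of P] assms in auto)
  thus ?thesis by (simp add: sset_range)
qed




theorem mainTheorem6:
  fixes d :: nat
    and X :: "'a::euclidean_space set"
    and loss :: "'a \<Rightarrow> nat \<Rightarrow> real"
    and a :: "nat \<Rightarrow> real"
  assumes d2: "d \<ge> 2"
    and X_compact: "compact X"
    and loss_cont: "\<And>i. i \<in> {1..d} \<Longrightarrow> continuous_on X (\<lambda>x. loss x i)"
    and a_pos: "\<And>T. T \<ge> 1 \<Longrightarrow> a T > 0"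
    and a_inf: "filterlim a at_top sequentially"
    and subexp: "(\<lambda>T. a T / real T) \<longlonglongrightarrow> 0"
  shows "\<forall>x\<in>X. \<forall>P :: nat pmf. set_pmf P = {1..d} \<longrightarrow>
           limsup (\<lambda>T. elog (measure (stream_space (measure_pmf P))
              {\<omega> \<in> space (stream_space (measure_pmf P)).
                 cost d loss x (pmf P) > svp d loss a x (empirical T \<omega>) T}) / ereal (a T))
           \<le> -1"
proof (intro ballI allI impI)
  fix x and P :: "nat pmf"
  assume sP: "set_pmf P = {1..d}"
  let ?SS = "stream_space (measure_pmf P)"
  interpret S: prob_space ?SS
    by (rule prob_space.prob_space_stream_space[OF prob_space_measure_pmf])
  define m where "m = cost d loss x (pmf P)"
  define \<sigma>2 where "\<sigma>2 = varc d loss x (pmf P)"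
  define pr where "pr T = measure ?SS {\<omega> \<in> space ?SS. m > svp d loss a x (empirical T \<omega>) T}" for T
  have fin: "finite {1..d}" by simp
  have sP': "set_pmf P \<subseteq> {1..d}" using sP by simp
  have sum1: "(\<Sum>i\<in>{1..d}. pmf P i) = 1" by (rule sum_pmf_eq_1[OF fin sP'])
  have ppos: "pmf P i > 0" if "i \<in> {1..d}" for i
    using that sP by (metis pmf_positive)
  have AEs: "AE \<omega> in ?SS. \<forall>t. \<omega> !! t \<in> {1..d}" by (rule test_AE[OF sP])
  have m_alt: "m = (\<Sum>i\<in>{1..d}. pmf P i * loss x i)" unfolding m_def cost_def by (simp add: mult.commute)
  have s2_alt: "\<sigma>2 = (\<Sum>i\<in>{1..d}. pmf P i * (loss x i - m)^2)" unfolding \<sigma>2_def varc_def m_def ..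
  have s2nn: "\<sigma>2 \<ge> 0" unfolding s2_alt by (intro sum_nonneg) simp
  have pr_nn: "pr T \<ge> 0" for T unfolding pr_def by simp

  
  have chat: "cost d loss x (empirical T \<omega>) = (\<Sum>t<T. loss x (\<omega> !! t)) / real T"
    if "\<forall>t. \<omega> !! t \<in> {1..d}" for T \<omega>
    unfolding cost_def by (rule sum_emp) (use that in auto)
  have vhat: "varc d loss x (empirical T \<omega>) = (\<Sum>t<T. (loss x (\<omega> !! t) - (\<Sum>t<T. loss x (\<omega> !! t)) / real T)^2) / real T"
    if "\<forall>t. \<omega> !! t \<in> {1..d}" for T \<omega>
  proof -
    have "varc d loss x (empirical T \<omega>) = (\<Sum>i\<in>{1..d}. (\<lambda>i. (loss x i - (\<Sum>t<T. loss x (\<omega> !! t)) / real T)^2) i * empirical T \<omega> i)"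
      unfolding varc_def chat[OF that] by (simp add: mult.commute)
    also have "\<dots> = (\<Sum>t<T. (loss x (\<omega> !! t) - (\<Sum>t<T. loss x (\<omega> !! t)) / real T)^2) / real T"
      by (rule sum_emp) (use that in auto)
    finally show ?thesis .
  qed

  have incl: "real T * (\<epsilon> * \<sigma>2) \<le> (\<Sum>t<T. \<sigma>2 - (loss x (\<omega> !! t) - m)^2)
       \<or> real T * sqrt (2 * a T / real T * (1 - \<epsilon>) * \<sigma>2 / (1 + 2 * a T / real T)) \<le> (\<Sum>t<T. m - loss x (\<omega> !! t))"
    if T: "T \<ge> 1" and e: "0 \<le> \<epsilon>" "\<epsilon> \<le> 1" and w: "\<forall>t. \<omega> !! t \<in> {1..d}"
      and ev: "m > svp d loss a x (empirical T \<omega>) T" for T \<epsilon> \<omega>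
  proof (rule det)
    show "0 < T" using T by simp
    show "0 < 2 * a T / real T" using a_pos[OF T] T by simp
    show "m > (\<Sum>t<T. loss x (\<omega> !! t))/T + sqrt (2 * a T / real T * ((\<Sum>t<T. (loss x (\<omega> !! t) - (\<Sum>t<T. loss x (\<omega> !! t))/T)^2)/T))"
      using ev unfolding svp_def chat[OF w] vhat[OF w] .
  qed (use e s2nn in auto)

  show "limsup (\<lambda>T. elog (measure ?SS
              {\<omega> \<in> space ?SS. cost d loss x (pmf P) > svp d loss a x (empirical T \<omega>) T}) / ereal (a T)) \<le> -1"
  proof -
    have goal: "limsup (\<lambda>T. elog (pr T) / ereal (a T)) \<le> -1"
    proof (cases "\<sigma>2 = 0")
      case True
      have lm: "loss x i = m" if "i \<in> {1..d}" for i
      proof -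
        have "(\<Sum>i\<in>{1..d}. pmf P i * (loss x i - m)^2) = 0" using True s2_alt by simp
        hence "pmf P i * (loss x i - m)^2 = 0" using that by (subst (asm) sum_nonneg_eq_0_iff) auto
        thus ?thesis using ppos[OF that] by simp
      qed
      have pr0: "pr T = 0" if T: "T \<ge> 1" for T
      proof -
        have "pr T \<le> measure ?SS {}"
          unfolding pr_def
        proof (rule measure_AE_le[OF S.prob_space_axioms AEs])
          fix \<omega> assume w: "\<forall>t. \<omega> !! t \<in> {1..d}" and "\<omega> \<in> {\<omega> \<in> space ?SS. m > svp d loss a x (empirical T \<omega>) T}"
          hence ev: "m > svp d loss a x (empirical T \<omega>) T" by simp
          have "cost d loss x (empirical T \<omega>) = (\<Sum>t<T. m) / real T"
            unfolding chat[OF w] using w lm by (intro arg_cong2[where f="(/)"] sum.cong) auto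
          also have "\<dots> = m" using T by simp
          finally have cm: "cost d loss x (empirical T \<omega>) = m" .
          have "varc d loss x (empirical T \<omega>) \<ge> 0" unfolding vhat[OF w] by (simp add: sum_nonneg)
          hence "0 \<le> 2 * a T / real T * varc d loss x (empirical T \<omega>)"
            using a_pos[OF T] by (intro mult_nonneg_nonneg) auto
          hence "svp d loss a x (empirical T \<omega>) T \<ge> m" unfolding svp_def cm by simp
          with ev show "\<omega> \<in> {}" by simp
        qed simp
        thus ?thesis using pr_nn[of T] by simp
      qed
      have "eventually (\<lambda>T. elog (pr T) / ereal (a T) \<le> -1) sequentially"
        using eventually_ge_at_top[of "1::nat"]
      proof eventually_elim
        case (elim T)
        thus ?case using pr0[OF elim] a_pos[OF elim] by (simp add: elog_def divide_ereal_def)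
      qed
      thus ?thesis by (rule Limsup_bounded)
    next
      case False
      hence s2p: "\<sigma>2 > 0" using s2nn by simp
      show ?thesis
      proof (rule ereal_le_epsilon2)
        fix \<delta> :: real assume dp: "\<delta> > 0"
        define \<epsilon> where "\<epsilon> = min (1/4) (\<delta>/3)"
        have ep: "\<epsilon> > 0" "\<epsilon> \<le> 1/4" "3 * \<epsilon> \<le> \<delta>" using dp by (auto simp: \<epsilon>_def)
        define g1 where "g1 i = m - loss x i" for i
        define g2 where "g2 i = \<sigma>2 - (loss x i - m)^2" for i
        define B1 where "B1 = (\<Sum>i\<in>{1..d}. \<bar>g1 i\<bar>)"
        define B2 where "B2 = (\<Sum>i\<in>{1..d}. \<bar>g2 i\<bar>)"
        define V2 where "V2 = (\<Sum>i\<in>{1..d}. pmf P i * (g2 i)^2)"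
        have B1b: "\<bar>g1 i\<bar> \<le> B1" if "i \<in> {1..d}" for i
          unfolding B1_def by (rule member_le_sum) (use that in auto)
        have B2b: "\<bar>g2 i\<bar> \<le> B2" if "i \<in> {1..d}" for i
          unfolding B2_def by (rule member_le_sum) (use that in auto)
        have B2nn: "B2 \<ge> 0" unfolding B2_def by (simp add: sum_nonneg)
        have V2nn: "V2 \<ge> 0" unfolding V2_def by (simp add: sum_nonneg)
        have mean1: "(\<Sum>i\<in>{1..d}. pmf P i * g1 i) = 0"
        proof -
          have "(\<Sum>i\<in>{1..d}. pmf P i * g1 i) = (\<Sum>i\<in>{1..d}. pmf P i) * m - (\<Sum>i\<in>{1..d}. pmf P i * loss x i)"
            unfolding g1_def by (simp add: right_diff_distrib sum_subtractf sum_distrib_right)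
          thus ?thesis using sum1 m_alt by simp
        qed
        have mean2: "(\<Sum>i\<in>{1..d}. pmf P i * g2 i) = 0"
        proof -
          have "(\<Sum>i\<in>{1..d}. pmf P i * g2 i) = (\<Sum>i\<in>{1..d}. pmf P i) * \<sigma>2 - (\<Sum>i\<in>{1..d}. pmf P i * (loss x i - m)^2)"
            unfolding g2_def by (simp add: right_diff_distrib sum_subtractf sum_distrib_right)
          thus ?thesis using sum1 s2_alt by simp
        qed
        have V1: "(\<Sum>i\<in>{1..d}. pmf P i * (g1 i)^2) = \<sigma>2"
          unfolding s2_alt g1_def by (simp add: power2_commute)
        define lam1 where "lam1 = min 1 (\<epsilon> * \<sigma>2 / (V2 * exp B2 + 1))"
        define c1 where "c1 = lam1 * (\<epsilon> * \<sigma>2) - lam1^2 * V2 * exp (lam1 * B2) / 2"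
        have l1p: "lam1 > 0" unfolding lam1_def using ep s2p V2nn by (auto intro!: divide_pos_pos add_nonneg_pos)
        have c1p: "c1 > 0"
        proof -
          have "lam1 * V2 * exp (lam1 * B2) \<le> lam1 * V2 * exp B2"
            using l1p V2nn B2nn by (intro mult_left_mono) (auto simp: lam1_def mult_left_le_one_le)
          also have "\<dots> \<le> (\<epsilon> * \<sigma>2 / (V2 * exp B2 + 1)) * (V2 * exp B2)"
          proof -
            have "lam1 \<le> \<epsilon> * \<sigma>2 / (V2 * exp B2 + 1)" unfolding lam1_def by simp
            hence "lam1 * (V2 * exp B2) \<le> (\<epsilon> * \<sigma>2 / (V2 * exp B2 + 1)) * (V2 * exp B2)"
              using V2nn by (intro mult_right_mono) auto
            thus ?thesis by (simp add: mult.assoc)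
          qed
          also have "\<dots> < \<epsilon> * \<sigma>2"
          proof -
            have "0 \<le> V2 * exp B2" using V2nn by simp
            hence "(V2 * exp B2) / (V2 * exp B2 + 1) < 1" by (simp add: divide_less_eq)
            hence "(\<epsilon> * \<sigma>2) * ((V2 * exp B2) / (V2 * exp B2 + 1)) < (\<epsilon> * \<sigma>2) * 1"
              using ep s2p by (intro mult_strict_left_mono) auto
            thus ?thesis by simp
          qed
          finally have "lam1 * V2 * exp (lam1 * B2) < \<epsilon> * \<sigma>2" .
          moreover have "0 \<le> lam1 * V2 * exp (lam1 * B2)" using l1p V2nn by simp
          ultimately have "lam1 * V2 * exp (lam1 * B2) / 2 < \<epsilon> * \<sigma>2" by linarith
          hence "lam1 * (lam1 * V2 * exp (lam1 * B2) / 2) < lam1 * (\<epsilon> * \<sigma>2)" using l1p by simp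
          thus ?thesis unfolding c1_def by (simp add: power2_eq_square mult.assoc)
        qed
        define r where "r T = 2 * a T / real T" for T
        define sT where "sT T = sqrt (r T * (1 - \<epsilon>) * \<sigma>2 / (1 + r T))" for T
        define h where "h T = 2 * (1 - \<epsilon>) * (exp (sT T * B1 / \<sigma>2) / 2 - 1) / (1 + r T)" for T
        have rlim: "r \<longlonglongrightarrow> 0"
        proof -
          have "(\<lambda>T. 2 * (a T / real T)) \<longlonglongrightarrow> 2 * 0" by (intro tendsto_intros subexp)
          thus ?thesis unfolding r_def by simp
        qed
        have hlim: "h \<longlonglongrightarrow> 2 * (1 - \<epsilon>) * (exp (sqrt (0 * (1 - \<epsilon>) * \<sigma>2 / (1 + 0)) * B1 / \<sigma>2) / 2 - 1) / (1 + 0)"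
          unfolding h_def sT_def by (intro tendsto_intros rlim) (use s2p in auto)
        have eqh: "2 * (1 - \<epsilon>) * (exp (sqrt (0 * (1 - \<epsilon>) * \<sigma>2 / (1 + 0)) * B1 / \<sigma>2) / 2 - 1) / (1 + 0) = -(1 - \<epsilon>)"
          by (simp add: field_simps)
        have hlim': "h \<longlonglongrightarrow> -(1 - \<epsilon>)" using hlim unfolding eqh .
        have ev_h: "eventually (\<lambda>T. h T < -(1 - 2 * \<epsilon>)) sequentially"
          by (rule order_tendstoD(2)[OF hlim']) (use ep in simp)
        have ev_c: "eventually (\<lambda>T. a T / real T < c1) sequentially"
          by (rule order_tendstoD(2)[OF subexp c1p])
        have ev_l: "eventually (\<lambda>T. ln 2 / \<epsilon> \<le> a T) sequentially"
          using a_inf unfolding filterlim_at_top by blast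
        have "eventually (\<lambda>T. elog (pr T) / ereal (a T) \<le> ereal (-1 + \<delta>)) sequentially"
          using ev_h ev_c ev_l eventually_ge_at_top[of "1::nat"]
        proof eventually_elim
          case (elim T)
          have T1: "T \<ge> 1" using elim by simp
          have aT: "a T > 0" using a_pos[OF T1] .
          have Tp: "real T > 0" using T1 by simp
          define E1 where "E1 = {\<omega> \<in> space ?SS. real T * (\<epsilon> * \<sigma>2) \<le> (\<Sum>t<T. g2 (\<omega> !! t))}"
          define E2 where "E2 = {\<omega> \<in> space ?SS. real T * sT T \<le> (\<Sum>t<T. g1 (\<omega> !! t))}"
          have E1s: "E1 \<in> sets ?SS" unfolding E1_def by (rule test_meas)
          have E2s: "E2 \<in> sets ?SS" unfolding E2_def by (rule test_meas)
          have "pr T \<le> measure ?SS (E1 \<union> E2)"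
            unfolding pr_def
          proof (rule measure_AE_le[OF S.prob_space_axioms AEs])
            fix \<omega> assume w: "\<forall>t. \<omega> !! t \<in> {1..d}" and "\<omega> \<in> space ?SS"
              and "\<omega> \<in> {\<omega> \<in> space ?SS. m > svp d loss a x (empirical T \<omega>) T}"
            hence evw: "m > svp d loss a x (empirical T \<omega>) T" and sp: "\<omega> \<in> space ?SS" by auto
            from incl[OF T1 _ _ w evw, of \<epsilon>] ep
            show "\<omega> \<in> E1 \<union> E2" using sp unfolding E1_def E2_def g1_def g2_def sT_def r_def by auto
          qed (use E1s E2s in auto)
          also have "\<dots> \<le> measure ?SS E1 + measure ?SS E2" by (rule measure_Un_le[OF E1s E2s])
          also have "measure ?SS E1 \<le> exp (- (real T * c1))"
          proof -
            have "measure ?SS E1 \<le> exp (- lam1 * (real T * (\<epsilon> * \<sigma>2)) + real T * (lam1^2 * (\<Sum>i\<in>{1..d}. pmf P i * (g2 i)^2) * exp (lam1*B2) / 2))"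
              unfolding E1_def by (rule chernoff_full[OF fin sP' _ mean2 B2b]) (use l1p in auto)
            also have "\<dots> = exp (- (real T * c1))" unfolding c1_def V2_def[symmetric]
              by (simp add: algebra_simps)
            finally show ?thesis .
          qed
          also have "measure ?SS E2 \<le> exp (a T * h T)"
          proof -
            have rp: "r T > 0" unfolding r_def using aT Tp by simp
            have argnn: "r T * (1 - \<epsilon>) * \<sigma>2 / (1 + r T) \<ge> 0" using rp ep s2nn by (intro divide_nonneg_pos mult_nonneg_nonneg) auto
            have sTnn: "sT T \<ge> 0" unfolding sT_def using argnn by simp
            have sq: "sT T * sT T = r T * (1 - \<epsilon>) * \<sigma>2 / (1 + r T)"
              unfolding sT_def real_sqrt_mult_self using argnn by (rule abs_of_nonneg)
            have Tr: "real T * r T = 2 * a T" unfolding r_def using Tp by simp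
            have "measure ?SS E2 \<le> exp (- (sT T / \<sigma>2) * (real T * sT T) + real T * ((sT T / \<sigma>2)^2 * (\<Sum>i\<in>{1..d}. pmf P i * (g1 i)^2) * exp ((sT T / \<sigma>2)*B1) / 2))"
              unfolding E2_def by (rule chernoff_full[OF fin sP' _ mean1 B1b]) (use sTnn s2p in auto)
            also have "- (sT T / \<sigma>2) * (real T * sT T) + real T * ((sT T / \<sigma>2)^2 * (\<Sum>i\<in>{1..d}. pmf P i * (g1 i)^2) * exp ((sT T / \<sigma>2)*B1) / 2)
                = real T * (sT T * sT T) / \<sigma>2 * (exp (sT T * B1 / \<sigma>2) / 2 - 1)"
              unfolding V1 using s2p by (simp add: field_simps power2_eq_square)
            also have "\<dots> = (real T * r T) * (1 - \<epsilon>) / (1 + r T) * (exp (sT T * B1 / \<sigma>2) / 2 - 1)"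
            proof -
              have c: "r T * (1 - \<epsilon>) * \<sigma>2 / (1 + r T) / \<sigma>2 = r T * (1 - \<epsilon>) / (1 + r T)"
                using s2p by simp
              have gen: "\<And>E::real. real T * (r T * (1 - \<epsilon>) * \<sigma>2 / (1 + r T)) / \<sigma>2 * E = (real T * r T) * (1 - \<epsilon>) / (1 + r T) * E"
              proof -
                fix E :: real
                have "real T * (r T * (1 - \<epsilon>) * \<sigma>2 / (1 + r T)) / \<sigma>2 * E = real T * (r T * (1 - \<epsilon>) * \<sigma>2 / (1 + r T) / \<sigma>2) * E"
                  by simp
                also have "\<dots> = (real T * r T) * (1 - \<epsilon>) / (1 + r T) * E" unfolding c by simp
                finally show "real T * (r T * (1 - \<epsilon>) * \<sigma>2 / (1 + r T)) / \<sigma>2 * E = (real T * r T) * (1 - \<epsilon>) / (1 + r T) * E" .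
              qed
              show ?thesis unfolding sq by (rule gen)
            qed
            also have "\<dots> = a T * h T"
            proof -
              have gen: "\<And>E::real. (2 * a T) * (1 - \<epsilon>) / (1 + r T) * E = a T * (2 * (1 - \<epsilon>) * E / (1 + r T))"
                using rp by (simp add: field_simps)
              show ?thesis unfolding Tr h_def by (rule gen)
            qed
            finally show ?thesis .
          qed
          finally have prb: "pr T \<le> exp (- (real T * c1)) + exp (a T * h T)" by simp
          have "a T < real T * c1" using elim Tp by (simp add: pos_divide_less_eq mult.commute)
          moreover have "a T * (1 - 2 * \<epsilon>) \<le> a T" using aT ep by (simp add: mult_left_le)
          ultimately have x1: "exp (- (real T * c1)) \<le> exp (- (a T * (1 - 2 * \<epsilon>)))" by simp
          have "a T * h T \<le> a T * (- (1 - 2 * \<epsilon>))" using aT elim by (intro mult_left_mono) auto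
          hence "a T * h T \<le> - (a T * (1 - 2 * \<epsilon>))" by (simp add: algebra_simps)
          hence x2: "exp (a T * h T) \<le> exp (- (a T * (1 - 2 * \<epsilon>)))" by simp
          have prq: "pr T \<le> 2 * exp (- (a T * (1 - 2 * \<epsilon>)))" using prb x1 x2 by linarith
          have "elog (pr T) / ereal (a T) \<le> ereal (ln (2 * exp (- (a T * (1 - 2 * \<epsilon>)))) / a T)"
            by (rule elog_div_le[OF aT pr_nn prq]) simp
          also have "ln (2 * exp (- (a T * (1 - 2 * \<epsilon>)))) / a T = ln 2 / a T - (1 - 2 * \<epsilon>)"
            using aT by (simp add: ln_mult diff_divide_distrib)
          also have "ln 2 / a T \<le> \<epsilon>" using elim ep aT by (simp add: divide_le_eq mult.commute)
          hence "ln 2 / a T - (1 - 2 * \<epsilon>) \<le> -1 + \<delta>" using ep by linarith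
          finally show ?case by simp
        qed
        hence "limsup (\<lambda>T. elog (pr T) / ereal (a T)) \<le> ereal (-1 + \<delta>)" by (rule Limsup_bounded)
        moreover have "ereal (-1 + \<delta>) = -1 + ereal \<delta>" by (simp add: one_ereal_def)
        ultimately show "limsup (\<lambda>T. elog (pr T) / ereal (a T)) \<le> -1 + ereal \<delta>" by simp
      qed
    qed
    thus ?thesis unfolding pr_def m_def .
  qed
qed


end
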